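(* $\mathcal M_\infty\subset\mathcal M_{-\infty}$.
   Context: Standing assumptions: $H$ is a real Hilbert space with norm $|\cdot|$. $A$ is a linear, closed, unbounded, positive self-adjoint operator on $H$ with compact inverse, so $H$ has an orthonormal basis of eigenvectors of $A$ with eigenvalues $0<\lambda_1<\lambda_2\le\cdots\le\lambda_N<\lambda_{N+1}\le\cdots\to\infty$ (counted with multiplicity). $F:H\to H$ satisfies $|F(u)|\le K_0$ and $|F(u)-F(v)|\le K_1|u-v|$ for all $u,v\in H$, with constants $K_0,K_1>0$ and $K_1<\lambda_{N+1}$; moreover there is $R>0$ with $F(u)=0$ whenever $|u|\ge R$. $P$ is the orthogonal (spectral) projection onto the span of the first $N$ eigenvectors of $A$, and $Q=I-P$; points of $H$ are identified with pairs $(p,q)\in PH\times QH$. A solution on an interval $J$ means a continuous function satisfying the variation of constants formula $u(t)=e^{-A(t-s)}u(s)+\int_s^t e^{-A(t-\tau)}F(u(\tau))\,d\tau$ for all $s\le t$ in $J$. For $t>0$, $\mathcal M_t=\{u(t): u \text{ is a solution of } u_t+Au=F(u) \text{ on } [0,t] \text{ with } Pu(0)\in PH \text{ arbitrary and } Qu(0)=0\}$. $\mathcal M_\infty$ is the set of all $(p_\infty,q_\infty)\in H$ for which there exist integers $n_1<n_2<\cdots$ and points $(p_{n_k},q_{n_k})\in\mathcal M_{n_k}$ with $(p_{n_k},q_{n_k})\to(p_\infty,q_\infty)$ in $H$. $\mathcal M_{-\infty}$ is the set of all $(p_0,q_0)\in H$ such that there is a solution $u(t)=p(t)+q(t)$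 of $u_t+Au=F(u)$ on $(-\infty,0]$ with $p(0)=p_0$, $q(0)=q_0$ and $q(t)=Qu(t)$ bounded on $(-\infty,0]$ (the backward bounded solutions). *)

theory Defs
  imports "HOL-Analysis.Analysis"
begin

text \<open>The operator A is given through its spectral data: an orthonormal basis
  e 0, e 1, ... of eigenvectors with eigenvalues lam 0, lam 1, ...
  (0-indexed: lam k is the paper's lambda_(k+1)).\<close>

definition expA :: "(nat \<Rightarrow> 'a::{real_inner,complete_space}) \<Rightarrow> (nat \<Rightarrow> real) \<Rightarrow> real \<Rightarrow> 'a \<Rightarrow> 'a" where
  "expA e lam t x = (\<Sum>k. (exp (- (t * lam k)) * (x \<bullet> e k)) *\<^sub>R e k)"

definition projP :: "(nat \<Rightarrow> 'a::real_inner) \<Rightarrow> nat \<Rightarrow> 'a \<Rightarrow> 'a" where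
  "projP e N x = (\<Sum>k<N. (x \<bullet> e k) *\<^sub>R e k)"

definition projQ :: "(nat \<Rightarrow> 'a::real_inner) \<Rightarrow> nat \<Rightarrow> 'a \<Rightarrow> 'a" where
  "projQ e N x = x - projP e N x"

text \<open>u is a (mild) solution of u_t + A u = F(u) on the interval J: continuous and
  satisfying the variation of constants formula for all s \<le> t in J.\<close>
definition is_solution ::
  "(nat \<Rightarrow> 'a::{real_inner,complete_space}) \<Rightarrow> (nat \<Rightarrow> real) \<Rightarrow> ('a \<Rightarrow> 'a) \<Rightarrow> real set \<Rightarrow> (real \<Rightarrow> 'a) \<Rightarrow> bool" where
  "is_solution e lam F J u \<longleftrightarrow> continuous_on J u \<and>
     (\<forall>s\<in>J. \<forall>t\<in>J. s \<le> t \<longrightarrow>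
        ((\<lambda>\<tau>. expA e lam (t - \<tau>) (F (u \<tau>))) has_integral (u t - expA e lam (t - s) (u s))) {s..t})"

definition Mt ::
  "(nat \<Rightarrow> 'a::{real_inner,complete_space}) \<Rightarrow> (nat \<Rightarrow> real) \<Rightarrow> nat \<Rightarrow> ('a \<Rightarrow> 'a) \<Rightarrow> real \<Rightarrow> 'a set" where
  "Mt e lam N F t = {u t | u. is_solution e lam F {0..t} u \<and> projQ e N (u 0) = 0}"

definition M_infty ::
  "(nat \<Rightarrow> 'a::{real_inner,complete_space}) \<Rightarrow> (nat \<Rightarrow> real) \<Rightarrow> nat \<Rightarrow> ('a \<Rightarrow> 'a) \<Rightarrow> 'a set" where
  "M_infty e lam N F = {y. \<exists>n :: nat \<Rightarrow> nat. \<exists>x :: nat \<Rightarrow> 'a.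
      strict_mono n \<and> (\<forall>k. n k > 0) \<and> (\<forall>k. x k \<in> Mt e lam N F (real (n k))) \<and> x \<longlonglongrightarrow> y}"

definition M_minus_infty ::
  "(nat \<Rightarrow> 'a::{real_inner,complete_space}) \<Rightarrow> (nat \<Rightarrow> real) \<Rightarrow> nat \<Rightarrow> ('a \<Rightarrow> 'a) \<Rightarrow> 'a set" where
  "M_minus_infty e lam N F = {y. \<exists>u. is_solution e lam F {..0} u \<and> u 0 = y \<and>
      bounded ((\<lambda>t. projQ e N (u t)) ` {..0})}"

end

theory Submission
  imports Defs "HOL-Library.Diagonal_Subsequence"
begin

locale hs =
  fixes e :: "nat \<Rightarrow> 'a::{real_inner,complete_space}" and lam :: "nat \<Rightarrow> real"
    and F :: "'a \<Rightarrow> 'a" and K0 K1 :: real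
  assumes ortho: "\<And>i j. e i \<bullet> e j = (if i = j then 1 else 0)"
    and basis: "\<And>x. (\<lambda>n. \<Sum>k<n. (x \<bullet> e k) *\<^sub>R e k) \<longlonglongrightarrow> x"
    and lam_pos: "\<And>j. lam j > 0"
    and lam_mono: "mono lam"
    and lam_infty: "filterlim lam at_top sequentially"
    and Fb: "\<And>u. norm (F u) \<le> K0"
    and Fl: "\<And>u v. norm (F u - F v) \<le> K1 * norm (u - v)"
    and K0: "K0 > 0" and K1: "K1 > 0"
begin

lemma norm_e: "norm (e j) = 1"
  using ortho[of j j] by (simp add: norm_eq_sqrt_inner)

lemma abs_coeff: "\<bar>x \<bullet> e j\<bar> \<le> norm x"
  using Cauchy_Schwarz_ineq2[of x "e j"] norm_e by simp

lemma inner_sum_e: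
  assumes "finite A"
  shows "(\<Sum>k\<in>A. c k *\<^sub>R e k) \<bullet> e j = (if j \<in> A then c j else 0)"
proof -
  have "(\<Sum>k\<in>A. c k *\<^sub>R e k) \<bullet> e j = (\<Sum>k\<in>A. c k * (if k = j then 1 else 0))"
    by (simp add: inner_sum_left ortho)
  also have "\<dots> = (if j \<in> A then c j else 0)"
    using assms by (simp add: if_distrib[of "\<lambda>x. c _ * x"] sum.delta' cong: if_cong)
  finally show ?thesis .
qed

lemma norm2_sum:
  assumes "finite A"
  shows "(norm (\<Sum>k\<in>A. c k *\<^sub>R e k))\<^sup>2 = (\<Sum>k\<in>A. (c k)\<^sup>2)"
proof -
  have "(norm (\<Sum>k\<in>A. c k *\<^sub>R e k))\<^sup>2 = (\<Sum>k\<in>A. c k * (e k \<bullet> (\<Sum>k\<in>A. c k *\<^sub>R e k)))"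
    by (simp add: power2_norm_eq_inner inner_sum_left)
  also have "\<dots> = (\<Sum>k\<in>A. (c k)\<^sup>2)"
    using assms by (intro sum.cong) (auto simp: inner_commute[of "e _"] inner_sum_e power2_eq_square)
  finally show ?thesis .
qed

lemma parseval: "(\<lambda>k. (x \<bullet> e k)\<^sup>2) sums (norm x)\<^sup>2"
proof -
  have "(\<lambda>n. (norm (\<Sum>k<n. (x \<bullet> e k) *\<^sub>R e k))\<^sup>2) \<longlonglongrightarrow> (norm x)\<^sup>2"
    by (intro tendsto_intros basis)
  then show ?thesis unfolding sums_def by (simp add: norm2_sum)
qed

lemma coeff_eq:
  assumes "\<And>j. x \<bullet> e j = y \<bullet> e j"
  shows "x = y"
proof -
  have "(\<lambda>n. \<Sum>k<n. (y \<bullet> e k) *\<^sub>R e k) \<longlonglongrightarrow> x"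
    using basis[of x] by (simp add: assms)
  then show ?thesis using basis[of y] LIMSEQ_unique by blast
qed

lemma norm_le_coeff:
  assumes "\<And>j. (v \<bullet> e j)\<^sup>2 \<le> a\<^sup>2 * (w \<bullet> e j)\<^sup>2"
  shows "norm v \<le> \<bar>a\<bar> * norm w"
proof -
  have "(norm v)\<^sup>2 \<le> a\<^sup>2 * (norm w)\<^sup>2"
  proof -
    have s1: "(\<lambda>k. a\<^sup>2 * (w \<bullet> e k)\<^sup>2) sums (a\<^sup>2 * (norm w)\<^sup>2)"
      by (intro sums_mult parseval)
    show ?thesis
      using sums_le[OF assms parseval s1] by simp
  qed
  then have "(norm v)\<^sup>2 \<le> (\<bar>a\<bar> * norm w)\<^sup>2" by (simp add: power_mult_distrib)
  then show ?thesis by (rule power2_le_imp_le) simp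
qed

lemma series:
  assumes "summable (\<lambda>k. (c k)\<^sup>2)"
  shows "summable (\<lambda>k. c k *\<^sub>R e k)" "(\<Sum>k. c k *\<^sub>R e k) \<bullet> e j = c j"
proof -
  have cs: "Cauchy (\<lambda>n. \<Sum>k<n. c k *\<^sub>R e k)"
  proof (rule CauchyI')
    fix eps :: real assume "eps > 0"
    then have "eps\<^sup>2 > 0" by simp
    with assms obtain N where N: "\<forall>m\<ge>N. \<forall>n. norm (\<Sum>k\<in>{m..<n}. (c k)\<^sup>2) < eps\<^sup>2"
      unfolding summable_Cauchy by blast
    show "\<exists>M. \<forall>m\<ge>M. \<forall>n>m. dist (\<Sum>k<m. c k *\<^sub>R e k) (\<Sum>k<n. c k *\<^sub>R e k) < eps"
    proof (intro exI allI impI)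
      fix m n assume "m \<ge> N" "n > m"
      have eq: "(\<Sum>k<n. c k *\<^sub>R e k) = (\<Sum>k<m. c k *\<^sub>R e k) + (\<Sum>k\<in>{m..<n}. c k *\<^sub>R e k)"
        using \<open>n > m\<close> by (simp add: lessThan_atLeast0 sum.atLeastLessThan_concat)
      have "(norm (\<Sum>k\<in>{m..<n}. c k *\<^sub>R e k))\<^sup>2 < eps\<^sup>2"
        using N \<open>m \<ge> N\<close> by (simp add: norm2_sum) (meson abs_less_iff)
      then have "norm (\<Sum>k\<in>{m..<n}. c k *\<^sub>R e k) < eps"
        using \<open>eps > 0\<close> by (simp add: power_less_imp_less_base)
      then show "dist (\<Sum>k<m. c k *\<^sub>R e k) (\<Sum>k<n. c k *\<^sub>R e k) < eps"
        by (simp add: eq dist_norm)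
    qed
  qed
  then show sm: "summable (\<lambda>k. c k *\<^sub>R e k)"
    unfolding Cauchy_convergent_iff convergent_def summable_def sums_def .
  have "(\<lambda>k. (c k *\<^sub>R e k) \<bullet> e j) sums ((\<Sum>k. c k *\<^sub>R e k) \<bullet> e j)"
    by (rule bounded_linear.sums[OF bounded_linear_inner_left summable_sums[OF sm]])
  moreover have "(\<lambda>k. (c k *\<^sub>R e k) \<bullet> e j) = (\<lambda>k. if k = j then c k else 0)"
    by (auto simp: ortho)
  ultimately show "(\<Sum>k. c k *\<^sub>R e k) \<bullet> e j = c j"
    using sums_single[of j c] sums_unique2 by metis
qed

end
context hs begin

abbreviation "E \<equiv> expA e lam"
abbreviation "Q \<equiv> projQ e"

lemma exp_le1: "t \<ge> 0 \<Longrightarrow> exp (- (t * lam j)) \<le> 1"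
  using lam_pos[of j] by simp

lemma expA_coeff:
  assumes "t \<ge> 0"
  shows "E t x \<bullet> e j = exp (- (t * lam j)) * (x \<bullet> e j)"
proof -
  have "summable (\<lambda>k. (exp (- (t * lam k)) * (x \<bullet> e k))\<^sup>2)"
  proof (rule summable_comparison_test')
    show "summable (\<lambda>k. (x \<bullet> e k)\<^sup>2)" using parseval sums_summable by blast
    fix k :: nat
    have "(exp (- (t * lam k)))\<^sup>2 \<le> 1"
      using exp_le1[OF assms, of k] by (simp add: power_le_one)
    then have "(exp (- (t * lam k)))\<^sup>2 * (x \<bullet> e k)\<^sup>2 \<le> 1 * (x \<bullet> e k)\<^sup>2"
      by (intro mult_right_mono) auto
    then show "norm ((exp (- (t * lam k)) * (x \<bullet> e k))\<^sup>2) \<le> (x \<bullet> e k)\<^sup>2"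
      by (simp add: power_mult_distrib)
  qed
  then show ?thesis unfolding expA_def by (rule series(2))
qed

lemma expA_norm:
  assumes "t \<ge> 0" shows "norm (E t x) \<le> norm x"
proof -
  have "norm (E t x) \<le> \<bar>1\<bar> * norm x"
  proof (rule norm_le_coeff)
    fix j
    have "(exp (- (t * lam j)))\<^sup>2 \<le> 1"
      using exp_le1[OF assms, of j] by (simp add: power_le_one)
    then have "(exp (- (t * lam j)))\<^sup>2 * (x \<bullet> e j)\<^sup>2 \<le> 1 * (x \<bullet> e j)\<^sup>2"
      by (intro mult_right_mono) auto
    then show "(E t x \<bullet> e j)\<^sup>2 \<le> 1\<^sup>2 * (x \<bullet> e j)\<^sup>2"
      by (simp add: expA_coeff[OF assms] power_mult_distrib)
  qed
  then show ?thesis by simp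
qed

lemma expA_bl: assumes "t \<ge> 0" shows "bounded_linear (E t)"
proof (rule bounded_linear_intro[where K=1])
  fix x y show "E t (x + y) = E t x + E t y"
    by (rule coeff_eq) (simp add: expA_coeff[OF assms] inner_add_left algebra_simps)
next
  fix r x show "E t (r *\<^sub>R x) = r *\<^sub>R E t x"
    by (rule coeff_eq) (simp add: expA_coeff[OF assms])
next
  fix x show "norm (E t x) \<le> norm x * 1" using expA_norm[OF assms] by simp
qed

lemma expA_diff: "t \<ge> 0 \<Longrightarrow> E t x - E t y = E t (x - y)"
  using linear_diff[OF bounded_linear.linear[OF expA_bl]] by metis

lemma Q_coeff: "Q M x \<bullet> e j = (if j < M then 0 else x \<bullet> e j)"
  by (simp add: projQ_def projP_def inner_diff_left inner_sum_e)

lemma Q_norm: "norm (Q M x) \<le> norm x"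
proof -
  have "norm (Q M x) \<le> \<bar>1\<bar> * norm x"
    by (rule norm_le_coeff) (simp add: Q_coeff)
  then show ?thesis by simp
qed

lemma Q_bl: "bounded_linear (Q M)"
proof (rule bounded_linear_intro[where K=1])
  fix x y show "Q M (x + y) = Q M x + Q M y"
    by (rule coeff_eq) (simp add: Q_coeff inner_add_left)
next
  fix r x show "Q M (r *\<^sub>R x) = r *\<^sub>R Q M x"
    by (rule coeff_eq) (simp add: Q_coeff)
next
  fix x show "norm (Q M x) \<le> norm x * 1" using Q_norm by simp
qed

lemma Q_expA:
  assumes "t \<ge> 0"
  shows "norm (Q M (E t x)) \<le> exp (- (t * lam M)) * norm (Q M x)"
proof -
  have "norm (Q M (E t x)) \<le> \<bar>exp (- (t * lam M))\<bar> * norm (Q M x)"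
  proof (rule norm_le_coeff)
    fix j
    show "(Q M (E t x) \<bullet> e j)\<^sup>2 \<le> (exp (- (t * lam M)))\<^sup>2 * (Q M x \<bullet> e j)\<^sup>2"
    proof (cases "j < M")
      case False
      then have "lam M \<le> lam j" using lam_mono by (simp add: mono_def)
      then have "exp (- (t * lam j)) \<le> exp (- (t * lam M))"
        using assms by (simp add: mult_left_mono)
      then have "(exp (- (t * lam j)))\<^sup>2 \<le> (exp (- (t * lam M)))\<^sup>2"
        by (intro power_mono) auto
      then have "(exp (- (t * lam j)))\<^sup>2 * (x \<bullet> e j)\<^sup>2 \<le> (exp (- (t * lam M)))\<^sup>2 * (x \<bullet> e j)\<^sup>2"
        by (intro mult_right_mono) auto
      then show ?thesis using False
        by (simp add: Q_coeff expA_coeff[OF assms] power_mult_distrib)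
    qed (simp add: Q_coeff)
  qed
  then show ?thesis by simp
qed

end
lemma norm_integral_le:
  fixes f :: "real \<Rightarrow> 'b::real_inner"
  assumes f: "(f has_integral I) S" and g: "(g has_integral J) S"
    and le: "\<And>x. x \<in> S \<Longrightarrow> norm (f x) \<le> g x"
  shows "norm I \<le> J"
proof (cases "I = 0")
  case True
  have "0 \<le> J" by (rule has_integral_nonneg[OF g]) (use le norm_ge_zero order_trans in blast)
  then show ?thesis using True by simp
next
  case False
  define w where "w = I /\<^sub>R norm I"
  have nw: "norm w = 1" using False by (simp add: w_def)
  have H: "(((\<lambda>x. x \<bullet> w) \<circ> f) has_integral I \<bullet> w) S"
    by (rule has_integral_linear[OF f bounded_linear_inner_left])
  have "I \<bullet> w = norm I" using False by (simp add: w_def power2_norm_eq_inner[symmetric] power2_eq_square)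
  moreover have "I \<bullet> w \<le> J"
  proof (rule has_integral_le[OF H g])
    fix x assume "x \<in> S"
    have "f x \<bullet> w \<le> norm (f x) * norm w" by (rule norm_cauchy_schwarz)
    then show "((\<lambda>x. x \<bullet> w) \<circ> f) x \<le> g x" using le[OF \<open>x \<in> S\<close>] nw by simp
  qed
  ultimately show ?thesis by simp
qed

lemma tri3: "norm (a - d) \<le> norm (a - b) + norm (b - c) + norm (c - (d::'b::real_normed_vector))"
proof -
  have "a - d = (a - b) + (b - c) + (c - d)" by simp
  then have "norm (a - d) \<le> norm ((a - b) + (b - c)) + norm (c - d)" by (metis norm_triangle_ineq)
  also have "\<dots> \<le> norm (a - b) + norm (b - c) + norm (c - d)" using norm_triangle_ineq[of "a - b" "b - c"] by linarith
  finally show ?thesis .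
qed

lemma has_integral_unif_lim:
  fixes f :: "real \<Rightarrow> 'b::real_normed_vector"
  assumes gi: "\<And>n. (g n has_integral h n) (cbox a b)" and hs: "h \<longlonglongrightarrow> s"
    and near: "\<And>\<epsilon>. \<epsilon> > 0 \<Longrightarrow> \<exists>N. \<forall>n\<ge>N. \<forall>x\<in>cbox a b. norm (f x - g n x) \<le> \<epsilon>"
  shows "(f has_integral s) (cbox a b)"
  unfolding has_integral
proof (intro allI impI)
  fix e :: real assume e: "e > 0"
  let ?c = "Henstock_Kurzweil_Integration.content (cbox a b)"
  have "e/3 > 0" using e by simp
  then obtain N1 where N1: "\<forall>n\<ge>N1. norm (h n - s) < e/3"
    using LIMSEQ_D[OF hs] by metis
  define \<delta> where "\<delta> = e/3 / (?c + 1)"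
  have dpos: "\<delta> > 0" using e by (simp add: \<delta>_def add_nonneg_pos)
  then obtain N2 where N2: "\<forall>n\<ge>N2. \<forall>x\<in>cbox a b. norm (f x - g n x) \<le> \<delta>"
    using near by blast
  define N where "N = N1 + N2"
  have hN: "norm (h N - s) < e/3" using N1 by (simp add: N_def)
  have nearN: "\<forall>x\<in>cbox a b. norm (f x - g N x) \<le> \<delta>" using N2 by (simp add: N_def)
  have dc: "\<delta> * ?c \<le> e/3"
  proof -
    have "\<delta> * ?c \<le> \<delta> * (?c + 1)" using dpos by (simp add: mult_left_mono)
    also have "\<dots> = e/3"
    proof -
      have gen: "\<And>c::real. c + 1 > 0 \<Longrightarrow> e/3 / (c + 1) * (c + 1) = e/3" by (simp add: field_simps)
      have "?c + 1 > 0" by (simp add: add_nonneg_pos)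
      from gen[OF this] show ?thesis unfolding \<delta>_def .
    qed
    finally show ?thesis .
  qed
  obtain \<gamma> where "gauge \<gamma>" and \<gamma>: "\<And>\<D>. \<D> tagged_division_of cbox a b \<and> \<gamma> fine \<D> \<Longrightarrow>
      norm ((\<Sum>(x,k)\<in>\<D>. Henstock_Kurzweil_Integration.content k *\<^sub>R g N x) - h N) < e/3"
    using gi[of N, unfolded has_integral] \<open>e/3 > 0\<close> by meson
  show "\<exists>\<gamma>. gauge \<gamma> \<and> (\<forall>\<D>. \<D> tagged_division_of cbox a b \<and> \<gamma> fine \<D> \<longrightarrow>
      norm ((\<Sum>(x,k)\<in>\<D>. Henstock_Kurzweil_Integration.content k *\<^sub>R f x) - s) < e)"
  proof (intro exI conjI allI impI)
    show "gauge \<gamma>" by fact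
    fix \<D> assume D: "\<D> tagged_division_of cbox a b \<and> \<gamma> fine \<D>"
    have r: "norm ((\<Sum>(x,k)\<in>\<D>. Henstock_Kurzweil_Integration.content k *\<^sub>R f x) -
        (\<Sum>(x,k)\<in>\<D>. Henstock_Kurzweil_Integration.content k *\<^sub>R g N x)) \<le> \<delta> * ?c"
      using D nearN by (intro rsum_diff_bound) auto
    have "norm ((\<Sum>(x,k)\<in>\<D>. Henstock_Kurzweil_Integration.content k *\<^sub>R f x) - s) \<le>
       norm ((\<Sum>(x,k)\<in>\<D>. Henstock_Kurzweil_Integration.content k *\<^sub>R f x) -
        (\<Sum>(x,k)\<in>\<D>. Henstock_Kurzweil_Integration.content k *\<^sub>R g N x)) +
       norm ((\<Sum>(x,k)\<in>\<D>. Henstock_Kurzweil_Integration.content k *\<^sub>R g N x) - h N) + norm (h N - s)"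
      by (rule tri3)
    also have "\<dots> < e" using r dc \<gamma>[OF D] hN by linarith
    finally show "norm ((\<Sum>(x,k)\<in>\<D>. Henstock_Kurzweil_Integration.content k *\<^sub>R f x) - s) < e" .
  qed
qed

context hs begin

abbreviation "sol \<equiv> is_solution e lam F"

lemma solD: "sol J u \<Longrightarrow> s \<in> J \<Longrightarrow> t \<in> J \<Longrightarrow> s \<le> t \<Longrightarrow>
   ((\<lambda>\<tau>. E (t - \<tau>) (F (u \<tau>))) has_integral (u t - E (t - s) (u s))) {s..t}"
  unfolding is_solution_def by blast

lemma sol_cont: "sol J u \<Longrightarrow> continuous_on J u"
  unfolding is_solution_def by blast

lemma sol_subset: "J' \<subseteq> J \<Longrightarrow> sol J u \<Longrightarrow> sol J' u"
  unfolding is_solution_def by (meson continuous_on_subset subsetD)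

lemma comp_formula:
  assumes "sol J u" "s \<in> J" "t \<in> J" "s \<le> t"
  shows "((\<lambda>\<tau>. exp (- ((t - \<tau>) * lam j)) * (F (u \<tau>) \<bullet> e j)) has_integral
           (u t \<bullet> e j - exp (- ((t - s) * lam j)) * (u s \<bullet> e j))) {s..t}"
proof -
  have H: "(((\<lambda>x. x \<bullet> e j) \<circ> (\<lambda>\<tau>. E (t - \<tau>) (F (u \<tau>)))) has_integral (u t - E (t - s) (u s)) \<bullet> e j) {s..t}"
    by (rule has_integral_linear[OF solD[OF assms] bounded_linear_inner_left])
  have eqv: "(u t - E (t - s) (u s)) \<bullet> e j = u t \<bullet> e j - exp (- ((t - s) * lam j)) * (u s \<bullet> e j)"
    using assms(4) by (simp add: inner_diff_left expA_coeff)
  have eqf: "\<And>\<tau>. \<tau> \<in> {s..t} \<Longrightarrow> ((\<lambda>x. x \<bullet> e j) \<circ> (\<lambda>\<tau>. E (t - \<tau>) (F (u \<tau>)))) \<tau> =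
      exp (- ((t - \<tau>) * lam j)) * (F (u \<tau>) \<bullet> e j)"
    by (simp add: expA_coeff)
  show ?thesis using iffD1[OF has_integral_cong[OF eqf] H] unfolding eqv .
qed

lemma back_bound:
  assumes "sol {a..b} u" "a \<le> s" "s \<le> t" "t \<le> b"
  shows "\<bar>u s \<bullet> e j\<bar> \<le> exp ((t - s) * lam j) * (norm (u t) + K0 * (t - s))"
proof -
  define I where "I = u t \<bullet> e j - exp (- ((t - s) * lam j)) * (u s \<bullet> e j)"
  have H: "((\<lambda>\<tau>. exp (- ((t - \<tau>) * lam j)) * (F (u \<tau>) \<bullet> e j)) has_integral I) (cbox s t)"
    unfolding I_def using comp_formula[OF assms(1), of s t j] assms by simp
  have bnd: "norm (exp (- ((t - \<tau>) * lam j)) * (F (u \<tau>) \<bullet> e j)) \<le> K0" if "\<tau> \<in> cbox s t" for \<tau>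
  proof -
    have "exp (- ((t - \<tau>) * lam j)) \<le> 1" using that by (intro exp_le1) auto
    moreover have "\<bar>F (u \<tau>) \<bullet> e j\<bar> \<le> K0" using abs_coeff Fb order_trans by blast
    ultimately have "exp (- ((t - \<tau>) * lam j)) * \<bar>F (u \<tau>) \<bullet> e j\<bar> \<le> 1 * K0"
      by (intro mult_mono) auto
    then show ?thesis by (simp add: abs_mult)
  qed
  have "norm I \<le> K0 * (t - s)"
    using has_integral_bound[OF _ H bnd] K0 assms by simp
  then have nI: "\<bar>I\<bar> \<le> K0 * (t - s)" using assms by simp
  have "exp (- ((t - s) * lam j)) * \<bar>u s \<bullet> e j\<bar> \<le> norm (u t) + K0 * (t - s)"
  proof -
    have "exp (- ((t - s) * lam j)) * \<bar>u s \<bullet> e j\<bar> = \<bar>u t \<bullet> e j - I\<bar>"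
      by (simp add: I_def abs_mult)
    also have "\<dots> \<le> \<bar>u t \<bullet> e j\<bar> + \<bar>I\<bar>" by simp
    also have "\<dots> \<le> norm (u t) + K0 * (t - s)" using abs_coeff nI by (intro add_mono) auto
    finally show ?thesis .
  qed
  then have "exp ((t - s) * lam j) * (exp (- ((t - s) * lam j)) * \<bar>u s \<bullet> e j\<bar>) \<le> exp ((t - s) * lam j) * (norm (u t) + K0 * (t - s))"
    by (intro mult_left_mono) auto
  then show ?thesis by (simp add: mult.assoc[symmetric] exp_add[symmetric])
qed

lemma Q_tail:
  assumes "sol {0..T} u" "Q M (u 0) = 0" "0 \<le> t" "t \<le> T"
  shows "norm (Q M (u t)) \<le> K0 / lam M"
proof -
  let ?g = "\<lambda>\<tau>. E (t - \<tau>) (F (u \<tau>))"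
  have H: "((Q M \<circ> ?g) has_integral Q M (u t - E t (u 0))) {0..t}"
    by (rule has_integral_linear[OF _ Q_bl]) (use solD[OF assms(1), of 0 t] assms in simp)
  have "norm (Q M (E t (u 0))) \<le> exp (- (t * lam M)) * norm (Q M (u 0))"
    using Q_expA assms by blast
  then have "Q M (E t (u 0)) = 0" using assms(2) by simp
  then have eq: "Q M (u t - E t (u 0)) = Q M (u t)"
    using linear_diff[OF bounded_linear.linear[OF Q_bl]] by (metis diff_zero)
  let ?L = "lam M"
  have Lp: "?L > 0" by (rule lam_pos)
  define G where "G = (\<lambda>\<tau>. K0 * exp (- ((t - \<tau>) * ?L)) / ?L)"
  have HG: "((\<lambda>\<tau>. K0 * exp (- ((t - \<tau>) * ?L))) has_integral (G t - G 0)) {0..t}"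
  proof (rule fundamental_theorem_of_calculus)
    show "0 \<le> t" by fact
    fix x :: real
    have "(G has_real_derivative K0 * exp (- ((t - x) * ?L))) (at x)"
      unfolding G_def using Lp by (auto intro!: derivative_eq_intros simp: field_simps)
    then show "(G has_vector_derivative K0 * exp (- ((t - x) * ?L))) (at x within {0..t})"
      by (simp add: has_real_derivative_iff_has_vector_derivative has_vector_derivative_at_within)
  qed
  have "norm (Q M (u t - E t (u 0))) \<le> G t - G 0"
  proof (rule norm_integral_le[OF H HG])
    fix \<tau> assume \<tau>: "\<tau> \<in> {0..t}"
    have "norm ((Q M \<circ> ?g) \<tau>) \<le> exp (- ((t - \<tau>) * ?L)) * norm (Q M (F (u \<tau>)))"
      using Q_expA \<tau> by simp
    also have "\<dots> \<le> exp (- ((t - \<tau>) * ?L)) * K0"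
      using Q_norm[of M] Fb by (intro mult_left_mono) (auto intro: order_trans)
    finally show "norm ((Q M \<circ> ?g) \<tau>) \<le> K0 * exp (- ((t - \<tau>) * ?L))" by (simp add: mult.commute)
  qed
  also have "\<dots> \<le> K0 / ?L" unfolding G_def using Lp K0 by (simp add: field_simps)
  finally show ?thesis using eq by simp
qed

end
context hs begin

lemma gron_step:
  assumes v: "sol {a..b} v" and w: "sol {a..b} w" and st: "a \<le> s" "s \<le> t" "t \<le> b"
    and small: "K1 * (t - s) \<le> 1/2"
  shows "norm (v t - w t) \<le> 2 * norm (v s - w s)"
proof -
  let ?\<phi> = "\<lambda>\<tau>. norm (v \<tau> - w \<tau>)"
  have c: "continuous_on {s..t} ?\<phi>"
    using continuous_on_subset[OF sol_cont[OF v], of "{s..t}"] continuous_on_subset[OF sol_cont[OF w], of "{s..t}"] st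
    by (intro continuous_intros) auto
  obtain \<tau>0 where \<tau>0: "\<tau>0 \<in> {s..t}" and mx: "\<And>y. y \<in> {s..t} \<Longrightarrow> ?\<phi> y \<le> ?\<phi> \<tau>0"
    using continuous_attains_sup[OF compact_Icc _ c] st by auto
  have Hv: "((\<lambda>\<tau>. E (\<tau>0 - \<tau>) (F (v \<tau>))) has_integral (v \<tau>0 - E (\<tau>0 - s) (v s))) {s..\<tau>0}"
    using solD[OF v, of s \<tau>0] st \<tau>0 by auto
  have Hw: "((\<lambda>\<tau>. E (\<tau>0 - \<tau>) (F (w \<tau>))) has_integral (w \<tau>0 - E (\<tau>0 - s) (w s))) {s..\<tau>0}"
    using solD[OF w, of s \<tau>0] st \<tau>0 by auto
  define I where "I = (v \<tau>0 - E (\<tau>0 - s) (v s)) - (w \<tau>0 - E (\<tau>0 - s) (w s))"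
  have HI: "((\<lambda>\<tau>. E (\<tau>0 - \<tau>) (F (v \<tau>)) - E (\<tau>0 - \<tau>) (F (w \<tau>))) has_integral I) (cbox s \<tau>0)"
    unfolding I_def using has_integral_diff[OF Hv Hw] by simp
  have "norm I \<le> (K1 * ?\<phi> \<tau>0) * Henstock_Kurzweil_Integration.content (cbox s \<tau>0)"
  proof (rule has_integral_bound[OF _ HI])
    show "0 \<le> K1 * ?\<phi> \<tau>0" using K1 by simp
    fix \<tau> assume \<tau>: "\<tau> \<in> cbox s \<tau>0"
    have "norm (E (\<tau>0 - \<tau>) (F (v \<tau>)) - E (\<tau>0 - \<tau>) (F (w \<tau>))) = norm (E (\<tau>0 - \<tau>) (F (v \<tau>) - F (w \<tau>)))"
      using \<tau> by (simp add: expA_diff)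
    also have "\<dots> \<le> norm (F (v \<tau>) - F (w \<tau>))" using \<tau> by (intro expA_norm) auto
    also have "\<dots> \<le> K1 * ?\<phi> \<tau>" by (rule Fl)
    also have "\<dots> \<le> K1 * ?\<phi> \<tau>0" using mx[of \<tau>] \<tau> \<tau>0 K1 by (intro mult_left_mono) auto
    finally show "norm (E (\<tau>0 - \<tau>) (F (v \<tau>)) - E (\<tau>0 - \<tau>) (F (w \<tau>))) \<le> K1 * ?\<phi> \<tau>0" .
  qed
  then have nI: "norm I \<le> K1 * ?\<phi> \<tau>0 * (\<tau>0 - s)" using \<tau>0 by simp
  have "K1 * ?\<phi> \<tau>0 * (\<tau>0 - s) = ?\<phi> \<tau>0 * (K1 * (\<tau>0 - s))" by simp
  also have "\<dots> \<le> ?\<phi> \<tau>0 * (1/2)"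
  proof (rule mult_left_mono)
    have "K1 * (\<tau>0 - s) \<le> K1 * (t - s)" using \<tau>0 K1 by (intro mult_left_mono) auto
    then show "K1 * (\<tau>0 - s) \<le> 1/2" using small by linarith
  qed simp
  finally have nI2: "norm I \<le> ?\<phi> \<tau>0 / 2" using nI by simp
  have eq: "v \<tau>0 - w \<tau>0 = E (\<tau>0 - s) (v s - w s) + I"
    using \<tau>0 by (simp add: I_def expA_diff[symmetric] algebra_simps)
  have "?\<phi> \<tau>0 \<le> norm (E (\<tau>0 - s) (v s - w s)) + norm I"
    unfolding eq by (rule norm_triangle_ineq)
  also have "\<dots> \<le> ?\<phi> s + ?\<phi> \<tau>0 / 2"
    using expA_norm[of "\<tau>0 - s" "v s - w s"] \<tau>0 nI2 by simp
  finally have "?\<phi> \<tau>0 \<le> 2 * ?\<phi> s" by simp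
  moreover have "?\<phi> t \<le> ?\<phi> \<tau>0" using mx[of t] st by simp
  ultimately show ?thesis by simp
qed

lemma gron_iter:
  assumes v: "sol {a..b} v" and w: "sol {a..b} w" and h: "h > 0" "K1 * h \<le> 1/2"
  shows "a \<le> s \<Longrightarrow> s \<le> t \<Longrightarrow> t \<le> b \<Longrightarrow> t - s \<le> real n * h \<Longrightarrow>
     norm (v t - w t) \<le> 2 ^ n * norm (v s - w s)"
proof (induction n arbitrary: t)
  case 0
  then show ?case by simp
next
  case (Suc n)
  define r where "r = max s (t - h)"
  have r: "s \<le> r" "r \<le> t" "r - s \<le> real n * h" "t - r \<le> h"
    using Suc.prems h by (auto simp: r_def algebra_simps)
  have "norm (v t - w t) \<le> 2 * norm (v r - w r)"
  proof (rule gron_step[OF v w])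
    have "K1 * (t - r) \<le> K1 * h" using r K1 by (intro mult_left_mono) auto
    then show "K1 * (t - r) \<le> 1/2" using h by linarith
  qed (use Suc.prems r in auto)
  also have "\<dots> \<le> 2 * (2 ^ n * norm (v s - w s))"
    using Suc.IH[of r] Suc.prems r by simp
  finally show ?case by simp
qed

lemma sol_shift:
  assumes "sol {0..T} u"
  shows "sol {-T..0} (\<lambda>t. u (t + T))"
  unfolding is_solution_def
proof (intro conjI ballI impI)
  show "continuous_on {-T..0} (\<lambda>t. u (t + T))"
  proof (rule continuous_on_compose2[OF sol_cont[OF assms]])
    show "continuous_on {-T..0} (\<lambda>t. t + T)" by (intro continuous_on_add continuous_on_id continuous_on_const)
    show "(\<lambda>t. t + T) ` {-T..0} \<subseteq> {0..T}" by auto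
  qed
  fix s t assume st: "s \<in> {-T..0}" "t \<in> {-T..0}" "s \<le> t"
  have H: "((\<lambda>\<tau>. E (t + T - \<tau>) (F (u \<tau>))) has_integral (u (t + T) - E (t + T - (s + T)) (u (s + T)))) {s + T..t + T}"
    using solD[OF assms, of "s + T" "t + T"] st by simp
  have H2: "(((\<lambda>\<tau>. E (t + T - \<tau>) (F (u \<tau>))) \<circ> (+) T) has_integral (u (t + T) - E (t + T - (s + T)) (u (s + T)))) {s..t}"
    by (rule has_integral_shift_Icc_real[THEN iffD2, OF H])
  show "((\<lambda>\<tau>. E (t - \<tau>) (F (u (\<tau> + T)))) has_integral (u (t + T) - E (t - s) (u (s + T)))) {s..t}"
  proof -
    have e1: "((\<lambda>\<tau>. E (t + T - \<tau>) (F (u \<tau>))) \<circ> (+) T) = (\<lambda>\<tau>. E (t - \<tau>) (F (u (\<tau> + T))))"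
    proof (rule ext)
      fix \<tau> :: real
      have a: "t + T - (T + \<tau>) = t - \<tau>" "T + \<tau> = \<tau> + T" "t + T - (\<tau> + T) = t - \<tau>" by simp_all
      show "((\<lambda>\<tau>. E (t + T - \<tau>) (F (u \<tau>))) \<circ> (+) T) \<tau> = E (t - \<tau>) (F (u (\<tau> + T)))"
        by (simp only: o_def a)
    qed
    have e2: "t + T - (s + T) = t - s" by simp
    show ?thesis using H2 unfolding e1 e2 .
  qed
qed

end
context hs begin

lemma mem_witness: "y = (\<Sum>j<M. c j *\<^sub>R e j) \<and> (\<forall>j<M. \<bar>c j\<bar> \<le> B j) \<Longrightarrow>
   y \<in> {(\<Sum>j<M. c j *\<^sub>R e j) | c. \<forall>j<M. \<bar>c j\<bar> \<le> B j}"
  apply (rule CollectI)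
  apply (rule exI[of _ c])
  apply assumption
  done

lemma mem_witnessD: "y \<in> {(\<Sum>j<M. c j *\<^sub>R e j) | c. \<forall>j<M. \<bar>c j\<bar> \<le> B j} \<Longrightarrow>
   \<exists>c. y = (\<Sum>j<M. c j *\<^sub>R e j) \<and> (\<forall>j<M. \<bar>c j\<bar> \<le> B j)"
  by (simp only: mem_Collect_eq)

lemma compact_C: "compact {(\<Sum>j<M. c j *\<^sub>R e j) | c. \<forall>j<M. \<bar>c j\<bar> \<le> B j}"
proof (induction M)
  case 0
  have "{(\<Sum>j<0. c j *\<^sub>R e j) | c. \<forall>j<(0::nat). \<bar>c j\<bar> \<le> B j} = {0}" by auto
  then show ?case by simp
next
  case (Suc M)
  let ?C = "{(\<Sum>j<M. c j *\<^sub>R e j) | c. \<forall>j<M. \<bar>c j\<bar> \<le> B j}"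
  let ?D = "(\<lambda>a. a *\<^sub>R e M) ` {-B M..B M}"
  have cD: "compact ?D"
    by (intro compact_continuous_image compact_Icc continuous_intros)
  have eq: "{(\<Sum>j<Suc M. c j *\<^sub>R e j) | c. \<forall>j<Suc M. \<bar>c j\<bar> \<le> B j} = {x + y | x y. x \<in> ?C \<and> y \<in> ?D}"
  proof (intro set_eqI iffI)
    fix z assume "z \<in> {(\<Sum>j<Suc M. c j *\<^sub>R e j) | c. \<forall>j<Suc M. \<bar>c j\<bar> \<le> B j}"
    from mem_witnessD[OF this] obtain c where z: "z = (\<Sum>j<Suc M. c j *\<^sub>R e j)" and c: "\<forall>j<Suc M. \<bar>c j\<bar> \<le> B j" by blast
    have "(\<Sum>j<M. c j *\<^sub>R e j) \<in> ?C" using c by (intro mem_witness conjI) auto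
    moreover have "c M *\<^sub>R e M \<in> ?D"
      by (rule rev_image_eqI[of "c M"]) (use c in \<open>auto simp: abs_le_iff\<close>)
    ultimately show "z \<in> {x + y | x y. x \<in> ?C \<and> y \<in> ?D}" using z by auto
  next
    fix z assume "z \<in> {x + y | x y. x \<in> ?C \<and> y \<in> ?D}"
    then obtain x y where xy: "z = x + y" "x \<in> ?C" "y \<in> ?D" by blast
    from mem_witnessD[OF xy(2)] obtain c where c0: "x = (\<Sum>j<M. c j *\<^sub>R e j)" and c: "\<forall>j<M. \<bar>c j\<bar> \<le> B j" by blast
    from xy(3) obtain a where a: "a \<in> {-B M..B M}" and a0: "y = a *\<^sub>R e M" by blast
    have z: "z = (\<Sum>j<M. c j *\<^sub>R e j) + a *\<^sub>R e M" using xy c0 a0 by simp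
    define c' where "c' = c(M := a)"
    have "(\<Sum>j<Suc M. c' j *\<^sub>R e j) = (\<Sum>j<M. c' j *\<^sub>R e j) + a *\<^sub>R e M" by (simp add: c'_def)
    also have "(\<Sum>j<M. c' j *\<^sub>R e j) = (\<Sum>j<M. c j *\<^sub>R e j)" by (intro sum.cong) (auto simp: c'_def)
    finally have "z = (\<Sum>j<Suc M. c' j *\<^sub>R e j)" using z by simp
    moreover have "\<forall>j<Suc M. \<bar>c' j\<bar> \<le> B j" using c a by (auto simp: c'_def less_Suc_eq abs_le_iff)
    ultimately show "z \<in> {(\<Sum>j<Suc M. c j *\<^sub>R e j) | c. \<forall>j<Suc M. \<bar>c j\<bar> \<le> B j}"
      by (intro mem_witness conjI)
  qed
  show ?case unfolding eq by (rule compact_sums[OF Suc.IH cD])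
qed

lemma precompact:
  assumes B: "\<And>x j. x \<in> S \<Longrightarrow> \<bar>x \<bullet> e j\<bar> \<le> B j"
    and T: "\<And>\<epsilon>. \<epsilon> > 0 \<Longrightarrow> \<exists>M. \<forall>x\<in>S. norm (Q M x) \<le> \<epsilon>"
  shows "compact (closure S)"
  unfolding compact_eq_totally_bounded
proof (intro conjI allI impI)
  show "complete (closure S)" by (simp add: complete_eq_closed)
  fix \<epsilon> :: real assume "\<epsilon> > 0"
  then have e3: "\<epsilon>/3 > 0" by simp
  obtain M where M: "\<forall>x\<in>S. norm (Q M x) \<le> \<epsilon>/3" using T[OF e3] by blast
  let ?C = "{(\<Sum>j<M. c j *\<^sub>R e j) | c. \<forall>j<M. \<bar>c j\<bar> \<le> B j}"
  obtain k where k: "finite k" "?C \<subseteq> (\<Union>x\<in>k. ball x (\<epsilon>/3))"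
    using compact_C[of M B] e3 unfolding compact_eq_totally_bounded by blast
  show "\<exists>k. finite k \<and> closure S \<subseteq> (\<Union>x\<in>k. ball x \<epsilon>)"
  proof (intro exI conjI subsetI)
    show "finite k" by fact
    fix z assume "z \<in> closure S"
    then obtain x where x: "x \<in> S" "dist x z < \<epsilon>/3" using closure_approachable e3 by blast
    have "projP e M x = (\<Sum>j<M. (\<lambda>k. x \<bullet> e k) j *\<^sub>R e j) \<and> (\<forall>j<M. \<bar>(\<lambda>k. x \<bullet> e k) j\<bar> \<le> B j)"
      by (simp add: projP_def B[OF x(1)])
    then have "projP e M x \<in> ?C" by (rule mem_witness)
    then have "projP e M x \<in> (\<Union>x\<in>k. ball x (\<epsilon>/3))" using k(2) by (rule subsetD[rotated])
    then obtain c0 where c0: "c0 \<in> k" "dist c0 (projP e M x) < \<epsilon>/3" by (auto simp only: UN_iff mem_ball)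
    have "projP e M x - x = - Q M x" by (simp add: projQ_def)
    then have "dist (projP e M x) x = norm (Q M x)" by (simp only: dist_norm norm_minus_cancel)
    then have "dist (projP e M x) x \<le> \<epsilon>/3" using M x by simp
    then have "dist c0 z < \<epsilon>" using c0 x dist_triangle[of c0 z "projP e M x"] dist_triangle[of "projP e M x" z x]
      by linarith
    then show "z \<in> (\<Union>x\<in>k. ball x \<epsilon>)" using c0 by auto
  qed
qed

lemma precompact_seq:
  fixes S :: "'a set" and X :: "nat \<Rightarrow> 'a"
  assumes "compact (closure S)" "\<And>k. X k \<in> S"
  obtains r l where "strict_mono r" "(X \<circ> r) \<longlonglongrightarrow> l"
proof -
  have "\<forall>k. X k \<in> closure S" using assms(2) closure_subset by blast
  show ?thesis
    by (rule seq_compactE[OF compact_imp_seq_compact[OF assms(1)] \<open>\<forall>k. X k \<in> closure S\<close>]) (rule that)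
qed

end
context hs begin

lemma Q_mono: "N \<le> M \<Longrightarrow> Q N v = 0 \<Longrightarrow> Q M v = 0"
proof (rule coeff_eq)
  fix j assume "N \<le> M" "Q N v = 0"
  then have "j \<ge> M \<Longrightarrow> v \<bullet> e j = 0" using Q_coeff[of N v j] by (simp split: if_splits)
  then show "Q M v \<bullet> e j = 0 \<bullet> e j" by (simp add: Q_coeff)
qed

lemma tail_index:
  assumes "\<epsilon> > 0"
  shows "\<exists>M\<ge>N. K0 / lam M \<le> \<epsilon>"
proof -
  have "\<forall>\<^sub>F M in sequentially. lam M \<ge> K0 / \<epsilon>"
    using lam_infty by (simp add: filterlim_at_top)
  then obtain M0 where M0: "\<forall>M\<ge>M0. lam M \<ge> K0 / \<epsilon>" by (auto simp: eventually_sequentially)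
  define M where "M = max M0 N"
  have "lam M \<ge> K0 / \<epsilon>" using M0 by (simp add: M_def)
  then have "K0 \<le> \<epsilon> * lam M" using assms by (simp add: field_simps)
  then have "K0 / lam M \<le> \<epsilon>" using lam_pos[of M] by (simp add: field_simps)
  then show ?thesis by (intro exI[of _ M]) (simp add: M_def)
qed

lemma main:
  assumes y: "y \<in> M_infty e lam N F"
  shows "y \<in> M_minus_infty e lam N F"
proof -
  obtain n x where n: "strict_mono n" and xm: "\<And>k. x k \<in> Mt e lam N F (real (n k))"
    and lim: "x \<longlonglongrightarrow> y"
    using y unfolding M_infty_def by blast
  have "\<forall>k. \<exists>v. x k = v (real (n k)) \<and> sol {0..real (n k)} v \<and> Q N (v 0) = 0"
    using xm unfolding Mt_def by blast
  then obtain u where u: "\<And>k. x k = u k (real (n k))" "\<And>k. sol {0..real (n k)} (u k)"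
    "\<And>k. Q N (u k 0) = 0"
    by metis
  define T where "T k = real (n k)" for k
  define V where "V k t = u k (t + T k)" for k t
  have solV: "sol {-T k..0} (V k)" for k
    unfolding V_def T_def by (rule sol_shift[OF u(2)])
  have nk: "k \<le> n k" for k using seq_suble[OF n] .
  have V0: "V k 0 = x k" for k by (simp add: V_def T_def u(1))
  obtain Xb where Xb: "\<And>k. norm (x k) \<le> Xb"
    using convergent_imp_Bseq[OF convergentI[OF lim]] unfolding Bseq_def by blast
  define W where "W m k = V k (- real m)" for m k
  have pc: "compact (closure {W m k | k. k \<ge> m})" for m
  proof (rule precompact)
    fix w j assume "w \<in> {W m k | k. k \<ge> m}"
    then obtain k where k: "k \<ge> m" "w = W m k" by blast
    have "\<bar>V k (- real m) \<bullet> e j\<bar> \<le> exp ((0 - - real m) * lam j) * (norm (V k 0) + K0 * (0 - - real m))"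
      using back_bound[OF solV[of k], of "- real m" 0 j] k nk[of k] by (simp add: T_def)
    also have "\<dots> \<le> exp (real m * lam j) * (Xb + K0 * real m)"
      using Xb[of k] by (simp add: V0)
    finally show "\<bar>w \<bullet> e j\<bar> \<le> exp (real m * lam j) * (Xb + K0 * real m)" using k by (simp add: W_def)
  next
    fix \<epsilon> :: real assume "\<epsilon> > 0"
    then obtain M where M: "M \<ge> N" "K0 / lam M \<le> \<epsilon>" using tail_index by blast
    show "\<exists>M. \<forall>w\<in>{W m k | k. k \<ge> m}. norm (Q M w) \<le> \<epsilon>"
    proof (intro exI ballI)
      fix w assume "w \<in> {W m k | k. k \<ge> m}"
      then obtain k where k: "k \<ge> m" "w = W m k" by blast
      have "norm (Q M (u k (- real m + T k))) \<le> K0 / lam M"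
        using Q_tail[OF u(2)[of k] Q_mono[OF M(1) u(3)[of k]]] k nk[of k] by (simp add: T_def)
      then show "norm (Q M w) \<le> \<epsilon>" using k M(2) by (simp add: W_def V_def)
    qed
  qed
  define P where "P m r \<longleftrightarrow> convergent (\<lambda>i. W m (r i))" for m and r :: "nat \<Rightarrow> nat"
  interpret D: subseqs P
  proof
    fix m and s :: "nat \<Rightarrow> nat" assume s: "strict_mono s"
    have Wm: "W m (s (i + m)) \<in> {W m k | k. k \<ge> m}" for i
    proof -
      have "s (i + m) \<ge> m" using seq_suble[OF s, of "i + m"] by simp
      then show ?thesis by (intro CollectI exI[of _ "s (i + m)"] conjI refl)
    qed
    obtain r0 l where r0: "strict_mono r0" "((\<lambda>i. W m (s (i + m))) \<circ> r0) \<longlonglongrightarrow> l"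
      by (rule precompact_seq[OF pc[of m] Wm])
    show "\<exists>r'. strict_mono r' \<and> P m (s \<circ> r')"
    proof (intro exI conjI)
      show "strict_mono (\<lambda>i. r0 i + m)" using r0(1) by (simp add: strict_mono_def)
      show "P m (s \<circ> (\<lambda>i. r0 i + m))" using r0(2) by (auto simp: P_def o_def convergent_def)
    qed
  qed
  define r where "r = D.diagseq"
  have r: "strict_mono r" unfolding r_def by (rule D.subseq_diagseq)
  have convW: "convergent (\<lambda>i. W m (r i))" for m
  proof -
    have "P m (D.diagseq \<circ> (+) (Suc m))"
      by (rule D.diagseq_holds) (auto simp: P_def o_def intro: convergent_subseq_convergent[unfolded o_def])
    then obtain l where "(\<lambda>i. W m (D.diagseq (i + Suc m))) \<longlonglongrightarrow> l"
      by (auto simp: P_def convergent_def o_def add.commute)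
    then have "(\<lambda>i. W m (D.diagseq i)) \<longlonglongrightarrow> l" by (rule LIMSEQ_offset)
    then show ?thesis by (auto simp: r_def convergent_def)
  qed
  define h where "h = 1 / (2 * K1)"
  have hpos: "h > 0" and hK: "K1 * h \<le> 1/2" using K1 by (auto simp: h_def)
  define nn where "nn m = nat \<lceil>real m / h\<rceil>" for m :: nat
  have nnh: "real m \<le> real (nn m) * h" for m
  proof -
    have "real m / h \<le> real (nn m)" unfolding nn_def by (rule real_nat_ceiling_ge)
    then have "real m / h * h \<le> real (nn m) * h" using hpos by (intro mult_right_mono) auto
    then show ?thesis using hpos by simp
  qed
  define C where "C m = (2::real) ^ nn m" for m
  have Cpos: "C m > 0" for m by (simp add: C_def)
  have Tr: "real i \<le> T (r i)" for i
  proof -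
    have "i \<le> r i" by (rule seq_suble[OF r])
    also have "r i \<le> n (r i)" by (rule nk)
    finally show ?thesis by (simp add: T_def)
  qed
  have solVm: "sol {- real m..0} (V (r i))" if "m \<le> i" for m i
  proof (rule sol_subset[OF _ solV])
    show "{- real m..0} \<subseteq> {- T (r i)..0}" using Tr[of i] that by auto
  qed
  have key: "norm (V (r i) t - V (r i') t) \<le> C m * norm (W m (r i) - W m (r i'))"
    if "m \<le> i" "m \<le> i'" "t \<in> {- real m..0}" for m i i' t
  proof -
    have "norm (V (r i) t - V (r i') t) \<le> 2 ^ nn m * norm (V (r i) (- real m) - V (r i') (- real m))"
      by (rule gron_iter[OF solVm[OF that(1)] solVm[OF that(2)] hpos hK]) (use that nnh[of m] in auto)
    then show ?thesis by (simp add: C_def W_def)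
  qed
  have unifC: "\<exists>I\<ge>m. \<forall>i\<ge>I. \<forall>i'\<ge>I. \<forall>t\<in>{- real m..0}. norm (V (r i) t - V (r i') t) < \<epsilon>"
    if "\<epsilon> > 0" for m \<epsilon>
  proof -
    have "Cauchy (\<lambda>i. W m (r i))" using convW[of m] by (simp add: Cauchy_convergent_iff)
    moreover have "\<epsilon> / C m > 0" using that Cpos[of m] by simp
    ultimately obtain I0 where I0: "\<forall>i\<ge>I0. \<forall>i'\<ge>I0. norm (W m (r i) - W m (r i')) < \<epsilon> / C m"
      using CauchyD by blast
    show ?thesis
    proof (intro exI[of _ "max I0 m"] conjI allI impI ballI)
      fix i i' t assume ii: "max I0 m \<le> i" "max I0 m \<le> i'" and t: "t \<in> {- real m..0}"
      have "norm (V (r i) t - V (r i') t) \<le> C m * norm (W m (r i) - W m (r i'))"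
        using key[of m i i' t] ii t by simp
      also have "\<dots> < C m * (\<epsilon> / C m)"
        using I0 ii Cpos[of m] by (intro mult_strict_left_mono) auto
      finally show "norm (V (r i) t - V (r i') t) < \<epsilon>" using Cpos[of m] by simp
    qed simp
  qed
  define U where "U t = lim (\<lambda>i. V (r i) t)" for t
  have conv: "(\<lambda>i. V (r i) t) \<longlonglongrightarrow> U t" if "t \<le> 0" for t
  proof -
    define m where "m = nat \<lceil>- t\<rceil>"
    have c: "- t \<le> real_of_int \<lceil>- t\<rceil>" by (rule le_of_int_ceiling)
    have "real m = real_of_int \<lceil>- t\<rceil>" using that by (simp add: m_def)
    then have "- real m \<le> t" using c by linarith
    then have tm: "t \<in> {- real m..0}" using that by simp
    have "Cauchy (\<lambda>i. V (r i) t)"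
    proof (rule CauchyI)
      fix \<epsilon> :: real assume "\<epsilon> > 0"
      then obtain I where "\<forall>i\<ge>I. \<forall>i'\<ge>I. \<forall>t\<in>{- real m..0}. norm (V (r i) t - V (r i') t) < \<epsilon>"
        using unifC by blast
      then show "\<exists>M. \<forall>i\<ge>M. \<forall>i'\<ge>M. norm (V (r i) t - V (r i') t) < \<epsilon>" using tm by blast
    qed
    then show ?thesis unfolding U_def Cauchy_convergent_iff convergent_LIMSEQ_iff .
  qed
  have unif: "\<exists>I. \<forall>i\<ge>I. \<forall>t\<in>{- real m..0}. norm (V (r i) t - U t) \<le> \<epsilon>" if eps: "\<epsilon> > 0" for m \<epsilon>
  proof -
    obtain I where I: "\<forall>i\<ge>I. \<forall>i'\<ge>I. \<forall>t\<in>{- real m..0}. norm (V (r i) t - V (r i') t) < \<epsilon>"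
      using unifC[OF eps, of m] by blast
    show ?thesis
    proof (intro exI allI impI ballI)
      fix i t assume i: "I \<le> i" and t: "t \<in> {- real m..0}"
      have "(\<lambda>i'. norm (V (r i) t - V (r i') t)) \<longlonglongrightarrow> norm (V (r i) t - U t)"
        using conv[of t] t by (intro tendsto_intros) auto
      then show "norm (V (r i) t - U t) \<le> \<epsilon>"
        by (rule LIMSEQ_le_const2) (use I i t in \<open>auto intro!: exI[of _ I] less_imp_le\<close>)
    qed
  qed
  have contm: "continuous_on {- real m..0} U" for m
  proof (rule uniform_limit_theorem)
    show "\<forall>\<^sub>F i in sequentially. continuous_on {- real m..0} (V (r i))"
      unfolding eventually_sequentially by (intro exI[of _ m] allI impI sol_cont[OF solVm])
    show "uniform_limit {- real m..0} (\<lambda>i. V (r i)) U sequentially"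
      unfolding uniform_limit_iff
    proof (intro allI impI)
      fix \<epsilon> :: real assume "\<epsilon> > 0"
      then have "\<epsilon>/2 > 0" by simp
      then obtain I where I: "\<forall>i\<ge>I. \<forall>t\<in>{- real m..0}. norm (V (r i) t - U t) \<le> \<epsilon>/2"
        using unif by blast
      show "\<forall>\<^sub>F i in sequentially. \<forall>t\<in>{- real m..0}. dist (V (r i) t) (U t) < \<epsilon>"
        unfolding eventually_sequentially
      proof (intro exI[of _ I] allI impI ballI)
        fix i t assume "I \<le> i" "t \<in> {- real m..0}"
        then have "norm (V (r i) t - U t) \<le> \<epsilon>/2" using I by blast
        then show "dist (V (r i) t) (U t) < \<epsilon>" using \<open>\<epsilon> > 0\<close> by (simp add: dist_norm)
      qed
    qed
  qed simp
  have cont: "continuous_on {..0} U"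
    unfolding continuous_on_eq_continuous_within
  proof
    fix t :: real assume "t \<in> {..0}"
    then have t: "t \<le> 0" by simp
    define m where "m = nat \<lceil>- t\<rceil> + 1"
    have c: "- t \<le> real_of_int \<lceil>- t\<rceil>" by (rule le_of_int_ceiling)
    have "real m = real_of_int \<lceil>- t\<rceil> + 1" using t by (simp add: m_def)
    then have tm: "- real m < t" using c by linarith
    have "continuous (at t within {- real m..0}) U"
      using contm[of m] tm t unfolding continuous_on_eq_continuous_within by simp
    moreover have "at t within {..0} = at t within {- real m..0}"
      by (rule at_within_nhd[of t "{- real m<..}"]) (use tm in auto)
    ultimately show "continuous (at t within {..0}) U" by simp
  qed
  have integ: "((\<lambda>\<tau>. E (t - \<tau>) (F (U \<tau>))) has_integral (U t - E (t - s) (U s))) {s..t}"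
    if st: "s \<le> 0" "t \<le> 0" "s \<le> t" for s t
  proof -
    define m where "m = nat \<lceil>- s\<rceil>"
    have c: "- s \<le> real_of_int \<lceil>- s\<rceil>" by (rule le_of_int_ceiling)
    have "real m = real_of_int \<lceil>- s\<rceil>" using st by (simp add: m_def)
    then have sm: "- real m \<le> s" using c by linarith
    have sub: "{s..t} \<subseteq> {- real m..0}" using sm st by auto
    have "((\<lambda>\<tau>. E (t - \<tau>) (F (U \<tau>))) has_integral (U t - E (t - s) (U s))) (cbox s t)"
    proof (rule has_integral_unif_lim)
      fix i
      show "((\<lambda>\<tau>. E (t - \<tau>) (F (V (r (i + m)) \<tau>))) has_integral
          (V (r (i + m)) t - E (t - s) (V (r (i + m)) s))) (cbox s t)"
        using solD[OF solVm[of m "i + m"], of s t] sm st by simp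
    next
      have bl: "bounded_linear (E (t - s))" using st by (intro expA_bl) simp
      show "(\<lambda>i. V (r (i + m)) t - E (t - s) (V (r (i + m)) s)) \<longlonglongrightarrow> U t - E (t - s) (U s)"
        by (intro tendsto_diff bounded_linear.tendsto[OF bl] LIMSEQ_ignore_initial_segment[OF conv] st)
    next
      fix \<epsilon> :: real assume "\<epsilon> > 0"
      then have "\<epsilon> / K1 > 0" using K1 by simp
      then obtain I where I: "\<forall>i\<ge>I. \<forall>t\<in>{- real m..0}. norm (V (r i) t - U t) \<le> \<epsilon> / K1"
        using unif by blast
      show "\<exists>N. \<forall>i\<ge>N. \<forall>\<tau>\<in>cbox s t. norm (E (t - \<tau>) (F (U \<tau>)) - E (t - \<tau>) (F (V (r (i + m)) \<tau>))) \<le> \<epsilon>"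
      proof (intro exI[of _ I] allI impI ballI)
        fix i \<tau> assume i: "I \<le> i" and \<tau>: "\<tau> \<in> cbox s t"
        then have \<tau>': "\<tau> \<in> {- real m..0}" "\<tau> \<le> t" using sub by auto
        have "norm (E (t - \<tau>) (F (U \<tau>)) - E (t - \<tau>) (F (V (r (i + m)) \<tau>)))
            = norm (E (t - \<tau>) (F (U \<tau>) - F (V (r (i + m)) \<tau>)))"
          using \<tau>' by (simp add: expA_diff)
        also have "\<dots> \<le> norm (F (U \<tau>) - F (V (r (i + m)) \<tau>))" using \<tau>' by (intro expA_norm) simp
        also have "\<dots> \<le> K1 * norm (U \<tau> - V (r (i + m)) \<tau>)" by (rule Fl)
        also have "\<dots> \<le> K1 * (\<epsilon> / K1)"
          using I i \<tau>' K1 by (intro mult_left_mono) (auto simp: norm_minus_commute)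
        also have "\<dots> = \<epsilon>" using K1 by simp
        finally show "norm (E (t - \<tau>) (F (U \<tau>)) - E (t - \<tau>) (F (V (r (i + m)) \<tau>))) \<le> \<epsilon>" .
      qed
    qed
    then show ?thesis by simp
  qed
  have Qb: "norm (Q N (U t)) \<le> K0 / lam N" if t: "t \<le> 0" for t
  proof -
    define m where "m = nat \<lceil>- t\<rceil>"
    have c: "- t \<le> real_of_int \<lceil>- t\<rceil>" by (rule le_of_int_ceiling)
    have "real m = real_of_int \<lceil>- t\<rceil>" using t by (simp add: m_def)
    then have tm: "- real m \<le> t" using c by linarith
    have "(\<lambda>i. norm (Q N (V (r i) t))) \<longlonglongrightarrow> norm (Q N (U t))"
      by (intro tendsto_norm bounded_linear.tendsto[OF Q_bl] conv t)
    moreover have "\<exists>I. \<forall>i\<ge>I. norm (Q N (V (r i) t)) \<le> K0 / lam N"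
    proof (intro exI[of _ m] allI impI)
      fix i assume "m \<le> i"
      then have "0 \<le> t + T (r i)" "t + T (r i) \<le> T (r i)" using Tr[of i] tm t by auto
      then show "norm (Q N (V (r i) t)) \<le> K0 / lam N"
        unfolding V_def using Q_tail[OF u(2)[of "r i"] u(3)[of "r i"]] by (simp add: T_def)
    qed
    ultimately show ?thesis by (rule LIMSEQ_le_const2)
  qed
  have U0: "U 0 = y"
  proof -
    have "(\<lambda>i. x (r i)) \<longlonglongrightarrow> y" using LIMSEQ_subseq_LIMSEQ[OF lim r] by (simp add: o_def)
    moreover have "(\<lambda>i. x (r i)) \<longlonglongrightarrow> U 0" using conv[of 0] by (simp add: V0)
    ultimately show ?thesis using LIMSEQ_unique by blast
  qed
  have "sol {..0} U"
    unfolding is_solution_def using cont integ by auto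
  moreover have "bounded ((\<lambda>t. Q N (U t)) ` {..0})"
    unfolding bounded_iff using Qb by auto
  ultimately show ?thesis unfolding M_minus_infty_def using U0 by blast
qed

end

theorem theorem4p1:
  fixes e :: "nat \<Rightarrow> 'a::{real_inner,complete_space}"
    and lam :: "nat \<Rightarrow> real" and N :: nat
    and F :: "'a \<Rightarrow> 'a" and K0 K1 R :: real
  assumes orthonormal: "\<And>i j. e i \<bullet> e j = (if i = j then 1 else 0)"
    and basis: "\<And>x. (\<lambda>n. \<Sum>k<n. (x \<bullet> e k) *\<^sub>R e k) \<longlonglongrightarrow> x"
    and lam_pos: "lam 0 > 0"
    and lam_01: "lam 0 < lam 1"
    and lam_mono: "mono lam"
    and lam_infty: "filterlim lam at_top sequentially"
    and N_pos: "N \<ge> 1"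
    and gap: "lam (N - 1) < lam N"
    and K0_pos: "K0 > 0" and K1_pos: "K1 > 0"
    and F_bounded: "\<And>u. norm (F u) \<le> K0"
    and F_lipschitz: "\<And>u v. norm (F u - F v) \<le> K1 * norm (u - v)"
    and K1_gap: "K1 < lam N"
    and R_pos: "R > 0"
    and F_support: "\<And>u. norm u \<ge> R \<Longrightarrow> F u = 0"
  shows "M_infty e lam N F \<subseteq> M_minus_infty e lam N F"
proof -
  have lp: "lam j > 0" for j
  proof -
    have "lam 0 \<le> lam j" using lam_mono by (simp add: mono_def)
    then show ?thesis using lam_pos by simp
  qed
  interpret hs e lam F K0 K1
    by (unfold_locales) (use orthonormal basis lp lam_mono lam_infty F_bounded F_lipschitz K0_pos K1_pos in auto)
  show ?thesis using main by blast
qed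

end
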